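(* For any $k\ge1$ and $n\in\mathbb Z$, in $S$: \[E_{k,n}\star E_{k,n}-q^{2k}E_{k,n-1}\star E_{k,n+1}=q^2E_{k+1,n-1}\star E_{k-1,n+1}.\]
   Context: Let $q$ be a formal variable. $S=\bigoplus_{k\ge0}S_k$, $S_k=\mathbb C(q)[x_1^{\pm1},\dots,x_k^{\pm1}]^{S(k)}$, with product $F\star G=\frac{1}{k!\ell!}\mathrm{Sym}_{x_1,\dots,x_{k+\ell}}\big(F(x_1,\dots,x_k)G(x_{k+1},\dots,x_{k+\ell})\prod_{r\le k<r'}\frac{x_r-q^{-2}x_{r'}}{x_r-x_{r'}}\big)$. For $k\ge1$, $E_{k,n}=\prod_{r=1}^kx_r^n\prod_{1\le r\ne s\le k}(x_r-q^{-2}x_s)\in S_k$, and $E_{0,n}=1\in S_0$ (the unit). *)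

theory Defs
  imports "HOL-Computational_Algebra.Polynomial" "HOL-Computational_Algebra.Fraction_Field"
          "HOL-Combinatorics.Permutations"
begin

type_synonym K = "complex poly fract"

definition qq :: K where "qq = Fract [:0, 1:] 1"

text \<open>An element of S_k (a symmetric Laurent polynomial in x_1..x_k) is represented
  by its evaluation function on points x :: nat => K, reading only x 0, ..., x (k-1)
  (0-based indexing: x_i of the paper is x (i-1)).  Since K is infinite, a Laurent
  polynomial is determined by its values at points with pairwise distinct nonzero
  coordinates.\<close>

definition E :: "nat \<Rightarrow> int \<Rightarrow> (nat \<Rightarrow> K) \<Rightarrow> K" where
  "E k n x = (\<Prod>r<k. x r powi n) *
     (\<Prod>r<k. \<Prod>s<k. if r \<noteq> s then x r - inverse (qq ^ 2) * x s else 1)"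

text \<open>Shuffle product of F in S_k and G in S_l, evaluated at x (meaningful when
  x 0, ..., x (k+l-1) are pairwise distinct).  Sym sums over all permutations of the
  k+l variables.\<close>
definition shuffle :: "nat \<Rightarrow> nat \<Rightarrow> ((nat \<Rightarrow> K) \<Rightarrow> K) \<Rightarrow> ((nat \<Rightarrow> K) \<Rightarrow> K)
    \<Rightarrow> (nat \<Rightarrow> K) \<Rightarrow> K" where
  "shuffle k l F G x = inverse (of_nat (fact k * fact l)) *
     (\<Sum>\<sigma> \<in> {\<sigma>. \<sigma> permutes {..<k+l}}.
        F (x \<circ> \<sigma>) * G (\<lambda>i. (x \<circ> \<sigma>) (i + k)) *
        (\<Prod>r<k. \<Prod>r'\<in>{k..<k+l}.
           ((x \<circ> \<sigma>) r - inverse (qq ^ 2) * (x \<circ> \<sigma>) r') / ((x \<circ> \<sigma>) r - (x \<circ> \<sigma>) r')))"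

end

theory Submission
  imports Defs
begin

definition tt :: K where "tt = inverse (qq^2)"

lemma qq_pow: "qq ^ m = Fract (monom 1 m) 1"
proof (induction m)
  case 0 thus ?case by (simp add: One_fract_def monom_0 one_pCons)
next
  case (Suc m) thus ?case
    by (simp add: qq_def monom_Suc)
qed

lemma qq_pow_ne1: "m > 0 \<Longrightarrow> qq ^ m \<noteq> 1"
  by (simp add: qq_pow One_fract_def eq_fract monom_eq_1_iff)

lemma qq_nz: "qq \<noteq> 0"
  by (simp add: qq_def Zero_fract_def eq_fract)

lemma tt_nz: "tt \<noteq> 0" by (simp add: tt_def qq_nz)
lemma tt_ne1: "tt \<noteq> 1"
  using qq_pow_ne1[of 2] by (auto simp: tt_def)
lemma tt_sq_ne1: "tt^2 \<noteq> 1"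
proof
  assume "tt^2 = 1"
  hence "qq^4 = 1" unfolding tt_def by (simp add: power_inverse flip: power_mult)
  thus False using qq_pow_ne1[of 4] by simp
qed
lemma tt_neg1: "tt \<noteq> -1" proof
  assume h: "tt = -1" have "tt^2 = 1" unfolding h by (simp add: power2_eq_square)
  thus False using tt_sq_ne1 by blast
qed

lemma infinite_K: "infinite (UNIV :: K set)"
proof
  assume "finite (UNIV :: K set)"
  moreover have "inj (of_nat :: nat \<Rightarrow> K)"
    by (auto simp: inj_on_def of_nat_fract eq_fract)
  ultimately show False
    using finite_imageD[of "of_nat :: nat \<Rightarrow> K" UNIV] by (meson finite_subset infinite_UNIV_nat subset_UNIV)
qed

definition om :: "(nat \<Rightarrow> K) \<Rightarrow> nat \<Rightarrow> nat \<Rightarrow> K" where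
  "om x r s = (x r - tt * x s) / (x r - x s)"
definition PP :: "(nat \<Rightarrow> K) \<Rightarrow> nat set \<Rightarrow> K" where
  "PP x A = (\<Prod>r\<in>A. \<Prod>s\<in>A. if r \<noteq> s then x r - tt * x s else 1)"
definition EE :: "(nat \<Rightarrow> K) \<Rightarrow> int \<Rightarrow> nat set \<Rightarrow> K" where
  "EE x a A = (\<Prod>r\<in>A. x r powi a) * PP x A"
definition CR :: "(nat \<Rightarrow> K) \<Rightarrow> nat set \<Rightarrow> nat set \<Rightarrow> K" where
  "CR x A B = (\<Prod>r\<in>A. \<Prod>s\<in>B. om x r s)"
definition Sh :: "(nat \<Rightarrow> K) \<Rightarrow> nat \<Rightarrow> int \<Rightarrow> int \<Rightarrow> nat set \<Rightarrow> K" where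
  "Sh x k a b V = (\<Sum>A\<in>{A. A \<subseteq> V \<and> card A = k}. EE x a A * EE x b (V - A) * CR x A (V - A))"

lemma PP_insert:
  assumes "finite A" "u \<notin> A"
  shows "PP x (insert u A) = PP x A * (\<Prod>s\<in>A. x u - tt * x s) * (\<Prod>r\<in>A. x r - tt * x u)"
proof -
  let ?f = "\<lambda>r s. if r \<noteq> s then x r - tt * x s else 1"
  have "PP x (insert u A) = (\<Prod>s\<in>insert u A. ?f u s) * (\<Prod>r\<in>A. \<Prod>s\<in>insert u A. ?f r s)"
    unfolding PP_def using assms by simp
  also have "(\<Prod>s\<in>insert u A. ?f u s) = (\<Prod>s\<in>A. x u - tt * x s)"
    using assms by (simp, intro prod.cong) auto
  also have "(\<Prod>r\<in>A. \<Prod>s\<in>insert u A. ?f r s) = (\<Prod>r\<in>A. (x r - tt * x u) * (\<Prod>s\<in>A. ?f r s))"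
    using assms by (intro prod.cong) auto
  also have "\<dots> = (\<Prod>r\<in>A. x r - tt * x u) * PP x A"
    unfolding PP_def by (simp add: prod.distrib)
  finally show ?thesis by (simp add: algebra_simps)
qed

lemma EE_insert:
  assumes "finite A" "u \<notin> A"
  shows "EE x a (insert u A) = x u powi a * EE x a A * (\<Prod>s\<in>A. x u - tt * x s) * (\<Prod>r\<in>A. x r - tt * x u)"
  unfolding EE_def using assms by (simp add: PP_insert algebra_simps)

lemma CR_insert_left:
  assumes "finite A" "u \<notin> A"
  shows "CR x (insert u A) B = (\<Prod>s\<in>B. om x u s) * CR x A B"
  unfolding CR_def using assms by simp

lemma CR_insert_right:
  assumes "finite B" "v \<notin> B"
  shows "CR x A (insert v B) = (\<Prod>r\<in>A. om x r v) * CR x A B"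
  unfolding CR_def using assms by (simp add: prod.distrib)

lemma subsets_split:
  assumes "finite V" "u \<in> V" "v \<in> V" "u \<noteq> v" "k \<ge> 1"
  shows "{A. A \<subseteq> V \<and> card A = k \<and> u \<in> A \<and> v \<notin> A} = insert u ` {C. C \<subseteq> V - {u,v} \<and> card C = k - 1}"
    and "inj_on (insert u) {C. C \<subseteq> V - {u,v} \<and> card C = k - 1}"
proof -
  show "inj_on (insert u) {C. C \<subseteq> V - {u,v} \<and> card C = k - 1}"
    by (rule inj_onI) (metis Diff_iff insert_absorb insert_commute insert_ident insertCI mem_Collect_eq subsetD)
  show "{A. A \<subseteq> V \<and> card A = k \<and> u \<in> A \<and> v \<notin> A} = insert u ` {C. C \<subseteq> V - {u,v} \<and> card C = k - 1}"
  proof (intro equalityI subsetI)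
    fix A assume A: "A \<in> {A. A \<subseteq> V \<and> card A = k \<and> u \<in> A \<and> v \<notin> A}"
    hence "A = insert u (A - {u})" by auto
    moreover have "A - {u} \<in> {C. C \<subseteq> V - {u,v} \<and> card C = k - 1}"
      using A assms by (auto simp: card_Diff_singleton finite_subset)
    ultimately show "A \<in> insert u ` {C. C \<subseteq> V - {u,v} \<and> card C = k - 1}" by blast
  next
    fix A assume "A \<in> insert u ` {C. C \<subseteq> V - {u,v} \<and> card C = k - 1}"
    then obtain C where C: "C \<subseteq> V - {u,v}" "card C = k - 1" "A = insert u C" by auto
    have "finite C" using C assms finite_subset by blast
    have "u \<notin> C" using C by auto
    hence "card A = k" using C assms \<open>finite C\<close> by simp
    thus "A \<in> {A. A \<subseteq> V \<and> card A = k \<and> u \<in> A \<and> v \<notin> A}" using C assms by auto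
  qed
qed

lemma prod_has_zero: "finite A \<Longrightarrow> a \<in> A \<Longrightarrow> f a = (0::K) \<Longrightarrow> prod f A = 0"
  by (metis prod_zero_iff)

lemma PP_zero:
  assumes "finite A" "u \<in> A" "v \<in> A" "u \<noteq> v" "x v = tt * x u"
  shows "PP x A = 0"
  unfolding PP_def
  by (rule prod_has_zero[OF assms(1) assms(3)], rule prod_has_zero[OF assms(1) assms(2)]) (use assms in simp)
definition gw :: "(nat \<Rightarrow> K) \<Rightarrow> nat \<Rightarrow> nat \<Rightarrow> K" where
  "gw x u w = (x u - tt * x w) * (x w - tt^2 * x u)"

lemma wheel:
  assumes V: "finite V" "u \<in> V" "v \<in> V" "u \<noteq> v" and inj: "inj_on x V"
    and xv: "x v = tt * x u" and k: "1 \<le> k" "k < card V"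
  shows "Sh x k a b V = x u powi a * x v powi b * om x u v * tt^(card V - k - 1)
           * (\<Prod>w\<in>V-{u,v}. gw x u w) * Sh x (k-1) a b (V - {u,v})"
proof -
  let ?S = "{A. A \<subseteq> V \<and> card A = k}"
  let ?S' = "{A. A \<subseteq> V \<and> card A = k \<and> u \<in> A \<and> v \<notin> A}"
  let ?S'' = "{C. C \<subseteq> V - {u,v} \<and> card C = k - 1}"
  let ?T = "\<lambda>A. EE x a A * EE x b (V - A) * CR x A (V - A)"
  let ?c = "x u powi a * x v powi b * om x u v * tt^(card V - k - 1)"
  have finS: "finite ?S" by (rule finite_subset[of _ "Pow V"]) (use V(1) in auto)
  have "Sh x k a b V = sum ?T ?S" unfolding Sh_def ..
  also have "\<dots> = sum ?T ?S'"
  proof (rule sum.mono_neutral_right[OF finS])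
    show "?S' \<subseteq> ?S" by auto
    show "\<forall>A\<in>?S - ?S'. ?T A = 0"
    proof
      fix A assume A: "A \<in> ?S - ?S'"
      have fA: "finite A" using A V(1) finite_subset by blast
      consider "u \<in> A" "v \<in> A" | "u \<notin> A" "v \<notin> A" | "u \<notin> A" "v \<in> A" using A by blast
      thus "?T A = 0"
      proof cases
        case 1 thus ?thesis using PP_zero[OF fA 1(1,2) V(4) xv] by (simp add: EE_def)
      next
        case 2 thus ?thesis using PP_zero[of "V - A" u v x] V xv by (simp add: EE_def)
      next
        case 3
        have "om x v u = 0" unfolding om_def using xv by simp
        hence "CR x A (V - A) = 0" unfolding CR_def
          by (intro prod_has_zero[OF fA 3(2)] prod_has_zero) (use 3 V in auto)
        thus ?thesis by simp
      qed
    qed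
  qed
  also have "\<dots> = sum ?T (insert u ` ?S'')"
    using subsets_split(1)[OF V k(1)] by simp
  also have "\<dots> = sum (?T \<circ> insert u) ?S''"
    by (rule sum.reindex[OF subsets_split(2)[OF V k(1)]])
  also have "\<dots> = (\<Sum>C\<in>?S''. ?c * (\<Prod>w\<in>V-{u,v}. gw x u w) * (EE x a C * EE x b (V - {u,v} - C) * CR x C (V - {u,v} - C)))"
  proof (rule sum.cong[OF refl])
    fix C assume C: "C \<in> ?S''"
    define D where "D = V - {u,v} - C"
    have fC: "finite C" and fD: "finite D" using C V(1) finite_subset unfolding D_def by auto
    have uC: "u \<notin> C" "v \<notin> C" and vD: "v \<notin> D" "u \<notin> D" using C unfolding D_def by auto
    have VD: "V - insert u C = insert v D" using C V unfolding D_def by auto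
    have CD: "C \<union> D = V - {u,v}" "C \<inter> D = {}" using C unfolding D_def by auto
    have cardD: "card D = card V - k - 1"
    proof -
      have "card (V - {u,v}) = card V - 2" using V by (simp add: card_Diff_subset)
      moreover have "card D = card (V - {u,v}) - card C" unfolding D_def
        using C V(1) by (intro card_Diff_subset) (auto intro: finite_subset)
      ultimately show ?thesis using C k by simp
    qed
    have g1: "(\<Prod>s\<in>C. x u - tt * x s) * (\<Prod>r\<in>C. x r - tt * x u) * (\<Prod>r\<in>C. om x r v) = (\<Prod>r\<in>C. gw x u r)"
    proof -
      have "(\<Prod>s\<in>C. x u - tt * x s) * (\<Prod>r\<in>C. x r - tt * x u) * (\<Prod>r\<in>C. om x r v)
            = (\<Prod>r\<in>C. (x u - tt * x r) * (x r - tt * x u) * om x r v)" by (simp add: prod.distrib)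
      also have "\<dots> = (\<Prod>r\<in>C. gw x u r)"
      proof (rule prod.cong[OF refl])
        fix r assume r: "r \<in> C"
        hence "r \<in> V" "r \<noteq> v" using C by auto
        hence "x r \<noteq> x v" using inj V by (meson inj_on_contraD)
        hence ne: "x r - tt * x u \<noteq> 0" using xv by simp
        show "(x u - tt * x r) * (x r - tt * x u) * om x r v = gw x u r"
          unfolding om_def gw_def xv using ne by (simp add: field_simps power2_eq_square)
      qed
      finally show ?thesis .
    qed
    have g2: "(\<Prod>s\<in>D. x v - tt * x s) * (\<Prod>r\<in>D. x r - tt * x v) * (\<Prod>s\<in>D. om x u s) = tt^(card D) * (\<Prod>r\<in>D. gw x u r)"
    proof -
      have "(\<Prod>s\<in>D. x v - tt * x s) * (\<Prod>r\<in>D. x r - tt * x v) * (\<Prod>s\<in>D. om x u s)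
            = (\<Prod>r\<in>D. (x v - tt * x r) * (x r - tt * x v) * om x u r)" by (simp add: prod.distrib)
      also have "\<dots> = (\<Prod>r\<in>D. tt * gw x u r)"
      proof (rule prod.cong[OF refl])
        fix r assume r: "r \<in> D"
        hence "r \<in> V" "r \<noteq> u" unfolding D_def by auto
        hence "x u \<noteq> x r" using inj V(2) by (metis inj_onD)
        hence ne: "x u - x r \<noteq> 0" by simp
        show "(x v - tt * x r) * (x r - tt * x v) * om x u r = tt * gw x u r"
          unfolding om_def gw_def xv using ne by (simp add: field_simps power2_eq_square)
      qed
      also have "\<dots> = tt^(card D) * (\<Prod>r\<in>D. gw x u r)" by (simp add: prod.distrib)
      finally show ?thesis .
    qed
    have gall: "(\<Prod>w\<in>V-{u,v}. gw x u w) = (\<Prod>r\<in>C. gw x u r) * (\<Prod>r\<in>D. gw x u r)"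
      using CD fC fD by (metis prod.union_disjoint)
    have "?T (insert u C) = EE x a (insert u C) * EE x b (insert v D) * CR x (insert u C) (insert v D)"
      by (simp add: VD)
    also have "\<dots> = (x u powi a * EE x a C * (\<Prod>s\<in>C. x u - tt * x s) * (\<Prod>r\<in>C. x r - tt * x u))
        * (x v powi b * EE x b D * (\<Prod>s\<in>D. x v - tt * x s) * (\<Prod>r\<in>D. x r - tt * x v))
        * ((om x u v * (\<Prod>s\<in>D. om x u s)) * ((\<Prod>r\<in>C. om x r v) * CR x C D))"
    proof -
      have e3: "CR x (insert u C) (insert v D) = (om x u v * (\<Prod>s\<in>D. om x u s)) * ((\<Prod>r\<in>C. om x r v) * CR x C D)"
        using CR_insert_left[OF fC uC(1), of x "insert v D"] CR_insert_right[OF fD vD(1), of x C] fD vD by simp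
      show ?thesis unfolding EE_insert[OF fC uC(1)] EE_insert[OF fD vD(1)] e3 by (simp only: mult.assoc)
    qed
    also have "\<dots> = x u powi a * x v powi b * om x u v * EE x a C * EE x b D * CR x C D
        * ((\<Prod>s\<in>C. x u - tt * x s) * (\<Prod>r\<in>C. x r - tt * x u) * (\<Prod>r\<in>C. om x r v))
        * ((\<Prod>s\<in>D. x v - tt * x s) * (\<Prod>r\<in>D. x r - tt * x v) * (\<Prod>s\<in>D. om x u s))"
      by (simp add: mult_ac)
    also have "\<dots> = ?c * (\<Prod>w\<in>V-{u,v}. gw x u w) * (EE x a C * EE x b D * CR x C D)"
      unfolding g1 g2 gall cardD by (simp add: mult_ac)
    finally show "(?T \<circ> insert u) C = ?c * (\<Prod>w\<in>V-{u,v}. gw x u w) * (EE x a C * EE x b (V - {u,v} - C) * CR x C (V - {u,v} - C))"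
      by (simp add: D_def)
  qed
  also have "\<dots> = ?c * (\<Prod>w\<in>V-{u,v}. gw x u w) * Sh x (k-1) a b (V - {u,v})"
    unfolding Sh_def by (simp add: sum_distrib_left)
  finally show ?thesis by (simp add: mult_ac)
qed

lemma of_nat_K_nz: "m \<noteq> 0 \<Longrightarrow> (of_nat m :: K) \<noteq> 0"
  by (simp add: of_nat_fract Zero_fract_def eq_fract)

lemma exists_perm_image:
  assumes "finite V" "S \<subseteq> V" "A \<subseteq> V" "card A = card S"
  shows "\<exists>\<rho>. \<rho> permutes V \<and> \<rho> ` S = A"
proof -
  have fS: "finite S" and fA: "finite A" using assms finite_subset by auto
  obtain f where f: "bij_betw f S A" using finite_same_card_bij[OF fS fA] assms(4) by metis
  have "card (V - S) = card (V - A)" using assms fS fA by (simp add: card_Diff_subset)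
  then obtain h where h: "bij_betw h (V - S) (V - A)"
    using finite_same_card_bij[of "V - S" "V - A"] assms(1) by auto
  define \<rho> where "\<rho> x = (if x \<in> S then f x else if x \<in> V then h x else x)" for x
  have b1: "bij_betw \<rho> S A" using f by (rule bij_betw_cong[THEN iffD1, rotated]) (simp add: \<rho>_def)
  have b2: "bij_betw \<rho> (V - S) (V - A)" using h by (rule bij_betw_cong[THEN iffD1, rotated]) (simp add: \<rho>_def)
  have "bij_betw \<rho> (S \<union> (V - S)) (A \<union> (V - A))" by (rule bij_betw_combine[OF b1 b2]) auto
  hence "bij_betw \<rho> V V" using assms by (simp add: Un_absorb1 Un_Diff_cancel)
  hence "\<rho> permutes V" by (rule bij_imp_permutes) (simp add: \<rho>_def, use assms in blast)
  moreover have "\<rho> ` S = A" using b1 by (simp add: bij_betw_def)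
  ultimately show ?thesis by blast
qed

lemma card_fib_eq:
  assumes "finite V" "S \<subseteq> V" "A \<subseteq> V" "card A = card S"
  shows "card {\<sigma>. \<sigma> permutes V \<and> \<sigma> ` S = A} = card {\<sigma>. \<sigma> permutes V \<and> \<sigma> ` S = S}"
proof -
  obtain \<rho> where r: "\<rho> permutes V" "\<rho> ` S = A" using exists_perm_image[OF assms] by blast
  have "bij_betw (\<lambda>\<sigma>. \<rho> \<circ> \<sigma>) {\<sigma>. \<sigma> permutes V \<and> \<sigma> ` S = S} {\<sigma>. \<sigma> permutes V \<and> \<sigma> ` S = A}"
  proof (rule bij_betwI[where g = "\<lambda>\<sigma>. inv \<rho> \<circ> \<sigma>"])
    show "(\<circ>) \<rho> \<in> {\<sigma>. \<sigma> permutes V \<and> \<sigma> ` S = S} \<rightarrow> {\<sigma>. \<sigma> permutes V \<and> \<sigma> ` S = A}"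
    proof
      fix \<sigma> assume s: "\<sigma> \<in> {\<sigma>. \<sigma> permutes V \<and> \<sigma> ` S = S}"
      have "(\<rho> \<circ> \<sigma>) ` S = \<rho> ` (\<sigma> ` S)" by (simp add: image_comp)
      thus "\<rho> \<circ> \<sigma> \<in> {\<sigma>. \<sigma> permutes V \<and> \<sigma> ` S = A}" using s r by (simp add: permutes_compose)
    qed
    show "(\<circ>) (inv \<rho>) \<in> {\<sigma>. \<sigma> permutes V \<and> \<sigma> ` S = A} \<rightarrow> {\<sigma>. \<sigma> permutes V \<and> \<sigma> ` S = S}"
    proof
      fix \<sigma> assume s: "\<sigma> \<in> {\<sigma>. \<sigma> permutes V \<and> \<sigma> ` S = A}"
      have "inv \<rho> permutes V" using r permutes_inv by blast
      moreover have "(inv \<rho> \<circ> \<sigma>) ` S = inv \<rho> ` (\<sigma> ` S)" by (simp add: image_comp)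
      hence "(inv \<rho> \<circ> \<sigma>) ` S = inv \<rho> ` (\<rho> ` S)" using s r by simp
      moreover have "inv \<rho> ` (\<rho> ` S) = S" using r(1) by (simp add: image_comp permutes_inv_o(2))
      ultimately show "inv \<rho> \<circ> \<sigma> \<in> {\<sigma>. \<sigma> permutes V \<and> \<sigma> ` S = S}" using s by (simp add: permutes_compose)
    qed
    show "inv \<rho> \<circ> (\<rho> \<circ> \<sigma>) = \<sigma>" for \<sigma> using r(1) by (metis comp_assoc permutes_inv_o(2) id_comp)
    show "\<rho> \<circ> (inv \<rho> \<circ> \<sigma>) = \<sigma>" for \<sigma> using r(1) by (metis comp_assoc permutes_inv_o(1) id_comp)
  qed
  thus ?thesis by (simp add: bij_betw_same_card)
qed

lemma sum_group_fib:
  fixes g :: "'a set \<Rightarrow> 'b::comm_monoid_add"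
  assumes "finite V" "S \<subseteq> V"
  shows "(\<Sum>\<sigma>\<in>{\<sigma>. \<sigma> permutes V}. g (\<sigma> ` S))
       = (\<Sum>A\<in>{A. A \<subseteq> V \<and> card A = card S}. (\<Sum>\<sigma>\<in>{\<sigma>. \<sigma> permutes V \<and> \<sigma> ` S = A}. g A))"
proof -
  have "(\<Sum>\<sigma>\<in>{\<sigma>. \<sigma> permutes V}. g (\<sigma> ` S))
    = (\<Sum>A\<in>{A. A \<subseteq> V \<and> card A = card S}. (\<Sum>\<sigma>\<in>{\<sigma>. \<sigma> \<in> {\<sigma>. \<sigma> permutes V} \<and> \<sigma> ` S = A}. g (\<sigma> ` S)))"
  proof (rule sum.group[symmetric])
    show "finite {\<sigma>. \<sigma> permutes V}" using assms(1) by (rule finite_permutations)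
    show "finite {A. A \<subseteq> V \<and> card A = card S}" by (rule finite_subset[of _ "Pow V"]) (use assms in auto)
    show "(\<lambda>\<sigma>. \<sigma> ` S) ` {\<sigma>. \<sigma> permutes V} \<subseteq> {A. A \<subseteq> V \<and> card A = card S}"
    proof (rule image_subsetI)
      fix \<sigma> assume "\<sigma> \<in> {\<sigma>. \<sigma> permutes V}"
      hence p: "\<sigma> permutes V" by simp
      have "inj_on \<sigma> S" using permutes_inj_on[OF p] .
      hence "card (\<sigma> ` S) = card S" by (rule card_image)
      moreover have "\<sigma> ` S \<subseteq> V" using p assms(2) permutes_image by (metis image_mono)
      ultimately show "\<sigma> ` S \<in> {A. A \<subseteq> V \<and> card A = card S}" by simp
    qed
  qed
  also have "\<dots> = (\<Sum>A\<in>{A. A \<subseteq> V \<and> card A = card S}. (\<Sum>\<sigma>\<in>{\<sigma>. \<sigma> permutes V \<and> \<sigma> ` S = A}. g A))"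
    by (intro sum.cong refl) auto
  finally show ?thesis .
qed

lemma card_fib:
  assumes "finite V" "S \<subseteq> V"
  shows "card {\<sigma>. \<sigma> permutes V \<and> \<sigma> ` S = S} = fact (card S) * fact (card V - card S)"
proof -
  let ?Sub = "{A. A \<subseteq> V \<and> card A = card S}"
  let ?c = "card {\<sigma>. \<sigma> permutes V \<and> \<sigma> ` S = S}"
  have "fact (card V) = card {\<sigma>. \<sigma> permutes V}" using card_permutations assms(1) by metis
  also have "\<dots> = (\<Sum>\<sigma>\<in>{\<sigma>. \<sigma> permutes V}. (\<lambda>A. 1::nat) (\<sigma> ` S))" by simp
  also have "\<dots> = (\<Sum>A\<in>?Sub. (\<Sum>\<sigma>\<in>{\<sigma>. \<sigma> permutes V \<and> \<sigma> ` S = A}. 1))"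
    using sum_group_fib[OF assms, of "\<lambda>A. (1::nat)"] by simp
  also have "\<dots> = (\<Sum>A\<in>?Sub. ?c)"
    by (intro sum.cong refl) (use card_fib_eq[OF assms(1,2)] in auto)
  also have "\<dots> = (card V choose card S) * ?c" using n_subsets[OF assms(1), of "card S"] by simp
  finally have eq: "fact (card V) = (card V choose card S) * ?c" .
  have le: "card S \<le> card V" using assms by (simp add: card_mono)
  have "fact (card S) * fact (card V - card S) * (card V choose card S) = fact (card V)"
    by (rule binomial_fact_lemma[OF le])
  hence "(card V choose card S) * (fact (card S) * fact (card V - card S)) = (card V choose card S) * ?c"
    using eq by (simp add: mult_ac)
  moreover have "(card V choose card S) \<noteq> 0" using le by simp
  ultimately show ?thesis by simp
qed

lemma sum_perm_image:
  fixes g :: "nat set \<Rightarrow> K"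
  assumes "finite V" "S \<subseteq> V"
  shows "(\<Sum>\<sigma>\<in>{\<sigma>. \<sigma> permutes V}. g (\<sigma> ` S))
       = of_nat (fact (card S) * fact (card V - card S)) * (\<Sum>A\<in>{A. A \<subseteq> V \<and> card A = card S}. g A)"
proof -
  have "(\<Sum>\<sigma>\<in>{\<sigma>. \<sigma> permutes V}. g (\<sigma> ` S))
       = (\<Sum>A\<in>{A. A \<subseteq> V \<and> card A = card S}. (\<Sum>\<sigma>\<in>{\<sigma>. \<sigma> permutes V \<and> \<sigma> ` S = A}. g A))"
    by (rule sum_group_fib[OF assms])
  also have "\<dots> = (\<Sum>A\<in>{A. A \<subseteq> V \<and> card A = card S}. of_nat (fact (card S) * fact (card V - card S)) * g A)"
    by (intro sum.cong refl) (simp add: card_fib_eq[OF assms] card_fib[OF assms])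
  finally show ?thesis by (simp add: sum_distrib_left)
qed

lemma E_EE:
  assumes "inj_on h {..<k}"
  shows "E k a (x \<circ> h) = EE x a (h ` {..<k})"
proof -
  have 1: "(\<Prod>r\<in>h ` {..<k}. x r powi a) = (\<Prod>r<k. (x \<circ> h) r powi a)"
    using prod.reindex[OF assms] by (simp add: comp_def)
  have 2: "PP x (h ` {..<k}) = (\<Prod>r<k. \<Prod>s<k. if r \<noteq> s then (x \<circ> h) r - inverse (qq^2) * (x \<circ> h) s else 1)"
  proof -
    have "PP x (h ` {..<k}) = (\<Prod>r<k. \<Prod>s\<in>h ` {..<k}. if h r \<noteq> s then x (h r) - tt * x s else 1)"
      unfolding PP_def using prod.reindex[OF assms] by (simp add: comp_def)
    also have "\<dots> = (\<Prod>r<k. \<Prod>s<k. if h r \<noteq> h s then x (h r) - tt * x (h s) else 1)"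
      by (rule prod.cong[OF refl]) (simp add: prod.reindex[OF assms] comp_def)
    also have "\<dots> = (\<Prod>r<k. \<Prod>s<k. if r \<noteq> s then (x \<circ> h) r - inverse (qq^2) * (x \<circ> h) s else 1)"
    proof (intro prod.cong refl)
      fix r s assume rs: "r \<in> {..<k}" "s \<in> {..<k}"
      hence "h r = h s \<longleftrightarrow> r = s" using inj_on_eq_iff[OF assms] by blast
      thus "(if h r \<noteq> h s then x (h r) - tt * x (h s) else 1) = (if r \<noteq> s then (x \<circ> h) r - inverse (qq^2) * (x \<circ> h) s else 1)"
        by (simp add: tt_def)
    qed
    finally show ?thesis .
  qed
  show ?thesis unfolding E_def EE_def 1 2 ..
qed

lemma shuffle_Sh: "shuffle k l (E k a) (E l b) x = Sh x k a b {..<k+l}"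
proof -
  let ?V = "{..<k+l}"
  let ?T = "\<lambda>A. EE x a A * EE x b (?V - A) * CR x A (?V - A)"
  have summand: "E k a (x \<circ> \<sigma>) * E l b (\<lambda>i. (x \<circ> \<sigma>) (i + k)) *
        (\<Prod>r<k. \<Prod>r'\<in>{k..<k+l}. ((x \<circ> \<sigma>) r - inverse (qq ^ 2) * (x \<circ> \<sigma>) r') / ((x \<circ> \<sigma>) r - (x \<circ> \<sigma>) r'))
        = ?T (\<sigma> ` {..<k})" if p: "\<sigma> permutes ?V" for \<sigma>
  proof -
    have inj: "inj_on \<sigma> X" for X using permutes_inj_on[OF p] .
    have img: "\<sigma> ` {k..<k+l} = ?V - \<sigma> ` {..<k}"
    proof -
      have "{k..<k+l} = ?V - {..<k}" by auto
      moreover have "\<sigma> ` (?V - {..<k}) = \<sigma> ` ?V - \<sigma> ` {..<k}" by (rule inj_on_image_set_diff[OF inj[of ?V]]) auto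
      ultimately have "\<sigma> ` {k..<k+l} = \<sigma> ` ?V - \<sigma> ` {..<k}" by simp
      thus ?thesis using permutes_image[OF p] by simp
    qed
    have e1: "E k a (x \<circ> \<sigma>) = EE x a (\<sigma> ` {..<k})" by (rule E_EE[OF inj])
    have "inj_on (\<lambda>i::nat. i + k) {..<l}" by (simp add: inj_on_def)
    hence "inj_on (\<sigma> \<circ> (\<lambda>i. i + k)) {..<l}" using inj by (rule comp_inj_on)
    hence "E l b (x \<circ> (\<sigma> \<circ> (\<lambda>i. i + k))) = EE x b ((\<sigma> \<circ> (\<lambda>i. i + k)) ` {..<l})" by (rule E_EE)
    moreover have "(\<sigma> \<circ> (\<lambda>i. i + k)) ` {..<l} = \<sigma> ` {k..<k+l}"
    proof -
      have "(\<lambda>i. i + k) ` {..<l} = {k..<k+l}"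
        by (simp add: lessThan_atLeast0 image_add_atLeastLessThan add.commute)
      thus ?thesis by (metis image_comp)
    qed
    ultimately have e2: "E l b (\<lambda>i. (x \<circ> \<sigma>) (i + k)) = EE x b (?V - \<sigma> ` {..<k})"
      by (simp add: img comp_def)
    have e3: "(\<Prod>r<k. \<Prod>r'\<in>{k..<k+l}. ((x \<circ> \<sigma>) r - inverse (qq ^ 2) * (x \<circ> \<sigma>) r') / ((x \<circ> \<sigma>) r - (x \<circ> \<sigma>) r'))
        = CR x (\<sigma> ` {..<k}) (?V - \<sigma> ` {..<k})"
    proof -
      have "CR x (\<sigma> ` {..<k}) (\<sigma> ` {k..<k+l}) = (\<Prod>r<k. \<Prod>s\<in>\<sigma> ` {k..<k+l}. om x (\<sigma> r) s)"
        unfolding CR_def using prod.reindex[OF inj] by (simp add: comp_def)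
      also have "\<dots> = (\<Prod>r<k. \<Prod>r'\<in>{k..<k+l}. om x (\<sigma> r) (\<sigma> r'))"
        by (rule prod.cong[OF refl]) (simp add: prod.reindex[OF inj] comp_def)
      finally show ?thesis by (simp add: img om_def tt_def)
    qed
    show ?thesis unfolding e1 e2 e3 ..
  qed
  have "shuffle k l (E k a) (E l b) x = inverse (of_nat (fact k * fact l)) * (\<Sum>\<sigma>\<in>{\<sigma>. \<sigma> permutes ?V}. ?T (\<sigma> ` {..<k}))"
    unfolding shuffle_def by (rule arg_cong[where f = "\<lambda>y. _ * y"], rule sum.cong[OF refl], rule summand) simp
  also have "(\<Sum>\<sigma>\<in>{\<sigma>. \<sigma> permutes ?V}. ?T (\<sigma> ` {..<k})) = of_nat (fact k * fact l) * Sh x k a b ?V"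
    using sum_perm_image[of ?V "{..<k}" ?T] by (simp add: Sh_def)
  also have "inverse (of_nat (fact k * fact l) :: K) * (of_nat (fact k * fact l) * Sh x k a b ?V) = Sh x k a b ?V"
    using of_nat_K_nz[of "fact k * fact l"] by (simp add: fact_nonzero del: of_nat_mult)
  finally show ?thesis .
qed

definition Om1 :: "(nat \<Rightarrow> K) \<Rightarrow> nat \<Rightarrow> nat set \<Rightarrow> K" where
  "Om1 x k V = Sh x k 1 1 V - inverse (tt^k) * Sh x k 0 2 V - inverse tt * Sh x (k+1) 0 2 V"

lemma PP_single: "PP x {a} = 1" by (simp add: PP_def)
lemma EE_single: "EE x c {a} = x a powi c" by (simp add: EE_def PP_single)
lemma PP_pair: "a \<noteq> b \<Longrightarrow> PP x {a,b} = (x a - tt * x b) * (x b - tt * x a)"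
  using PP_insert[of "{b}" a x] by (simp add: PP_single)

lemma subsets_pair1: "a \<noteq> b \<Longrightarrow> {A. A \<subseteq> {a,b} \<and> card A = 1} = {{a},{b}}"
proof (intro equalityI subsetI)
  fix A assume "A \<in> {A. A \<subseteq> {a,b} \<and> card A = 1}"
  then obtain c where "A = {c}" "c \<in> {a,b}" by (auto simp: card_1_singleton_iff)
  thus "A \<in> {{a},{b}}" by auto
qed auto

lemma subsets_pair2: "a \<noteq> b \<Longrightarrow> {A. A \<subseteq> {a,b} \<and> card A = 2} = {{a,b}}"
proof (intro equalityI subsetI)
  fix A assume a: "a \<noteq> b" and "A \<in> {A. A \<subseteq> {a,b} \<and> card A = 2}"
  hence "A \<subseteq> {a,b}" "card A = card {a,b}" by auto
  hence "A = {a,b}" by (intro card_subset_eq) auto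
  thus "A \<in> {{a,b}}" by simp
qed auto

lemma Om1_base:
  assumes "finite V" "card V = 2" "inj_on x V"
  shows "Om1 x 1 V = 0"
proof -
  obtain a b where V: "V = {a,b}" "a \<noteq> b" using assms(2) by (meson card_2_iff)
  have xab: "x a - x b \<noteq> 0" "x b - x a \<noteq> 0" using assms(3) V by (auto simp: inj_on_def)
  have Sh1: "Sh x 1 c d V = x a powi c * x b powi d * om x a b + x b powi c * x a powi d * om x b a" for c d
  proof -
    have "Sh x 1 c d V = (\<Sum>A\<in>{{a},{b}}. EE x c A * EE x d (V - A) * CR x A (V - A))"
      unfolding Sh_def using subsets_pair1[OF V(2)] V(1) by simp
    also have "\<dots> = EE x c {a} * EE x d {b} * CR x {a} {b} + EE x c {b} * EE x d {a} * CR x {b} {a}"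
      using V by (simp add: insert_Diff_if)
    finally show ?thesis by (simp add: EE_single CR_def)
  qed
  have Sh2: "Sh x (1+1) 0 2 V = (x a - tt * x b) * (x b - tt * x a)"
  proof -
    have e: "(1+1::nat) = 2" by simp
    have "Sh x (1+1) 0 2 V = Sh x 2 0 2 V" by (simp only: e)
    also have "\<dots> = (\<Sum>A\<in>{{a,b}}. EE x 0 A * EE x 2 ({a,b} - A) * CR x A ({a,b} - A))"
      unfolding Sh_def V(1) subsets_pair2[OF V(2)] ..
    also have "\<dots> = EE x 0 {a,b}" by (simp add: EE_def PP_def CR_def)
    finally show ?thesis using V by (simp add: EE_def PP_pair)
  qed
  have ob: "om x b a = (tt * x a - x b) / (x a - x b)" unfolding om_def
    by (metis minus_diff_eq minus_divide_divide)
  have "om x a b + om x b a = ((1+tt)*(x a - x b))/(x a - x b)" unfolding ob om_def[of x a b]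
    by (simp add: add_divide_distrib[symmetric] algebra_simps)
  hence s1: "om x a b + om x b a = 1 + tt" using xab by simp
  have "x b^2 * om x a b + x a^2 * om x b a = ((tt * (x a^2 + x a * x b + x b^2) - x a * x b) * (x a - x b))/(x a - x b)"
    unfolding ob om_def[of x a b] by (simp add: times_divide_eq_right[symmetric] add_divide_distrib[symmetric] algebra_simps power2_eq_square)
  hence s2: "x b^2 * om x a b + x a^2 * om x b a = tt * (x a^2 + x a * x b + x b^2) - x a * x b" using xab by simp
  have "Om1 x 1 V = x a * x b * (om x a b + om x b a) - inverse tt * (x b^2 * om x a b + x a^2 * om x b a)
      - inverse tt * ((x a - tt * x b) * (x b - tt * x a))"
    unfolding Om1_def Sh1 Sh2 by (simp add: algebra_simps power2_eq_square)
  also have "\<dots> = 0" unfolding s1 s2 using tt_nz by (simp add: field_simps power2_eq_square)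
  finally show ?thesis .
qed

lemma Om1_wheel:
  assumes V: "finite V" "card V = 2*k" "u \<in> V" "v \<in> V" "u \<noteq> v" and inj: "inj_on x V"
    and xv: "x v = tt * x u" and k: "2 \<le> k"
    and IH: "Om1 x (k-1) (V - {u,v}) = 0"
  shows "Om1 x k V = 0"
proof -
  obtain j where j: "k = Suc (Suc j)" using k by (metis add_2_eq_Suc le_Suc_ex)
  let ?G = "(\<Prod>w\<in>V-{u,v}. gw x u w)"
  let ?V = "V - {u,v}"
  have w1: "Sh x k 1 1 V = x u * x v * om x u v * tt^(Suc j) * ?G * Sh x (Suc j) 1 1 ?V"
    using wheel[OF V(1,3,4,5) inj xv, of k 1 1] V(2) j by simp
  have w2: "Sh x k 0 2 V = x v ^ 2 * om x u v * tt^(Suc j) * ?G * Sh x (Suc j) 0 2 ?V"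
    using wheel[OF V(1,3,4,5) inj xv, of k 0 2] V(2) j by simp
  have w3: "Sh x (k+1) 0 2 V = x v ^ 2 * om x u v * tt^j * ?G * Sh x (Suc (Suc j)) 0 2 ?V"
    using wheel[OF V(1,3,4,5) inj xv, of "k+1" 0 2] V(2) j by simp
  have IH': "Sh x (Suc j) 1 1 ?V = inverse (tt^(Suc j)) * Sh x (Suc j) 0 2 ?V + inverse tt * Sh x (Suc (Suc j)) 0 2 ?V"
    using IH j unfolding Om1_def by (simp add: algebra_simps)
  have "Om1 x k V = x u * x v * om x u v * tt^(Suc j) * ?G * Sh x (Suc j) 1 1 ?V
      - inverse (tt^k) * (x v ^ 2 * om x u v * tt^(Suc j) * ?G * Sh x (Suc j) 0 2 ?V)
      - inverse tt * (x v ^ 2 * om x u v * tt^j * ?G * Sh x (Suc (Suc j)) 0 2 ?V)"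
    unfolding Om1_def w1 w2 w3 ..
  also have "\<dots> = 0" unfolding IH' xv j using tt_nz
    by (simp add: field_simps power2_eq_square)
  finally show ?thesis .
qed

definition pf :: "(K \<Rightarrow> K) \<Rightarrow> nat \<Rightarrow> bool" where
  "pf f d \<longleftrightarrow> (\<exists>p. degree p \<le> d \<and> (\<forall>z. f z = poly p z))"

lemma pf_const: "pf (\<lambda>z. c) d"
  unfolding pf_def by (rule exI[of _ "[:c:]"]) simp

lemma pf_lin: "pf (\<lambda>z. a * z + b) 1"
  unfolding pf_def by (rule exI[of _ "[:b, a:]"]) (simp add: algebra_simps)

lemma pf_mono: "pf f d \<Longrightarrow> d \<le> e \<Longrightarrow> pf f e"
  unfolding pf_def by (meson order_trans)

lemma pf_add: "pf f d \<Longrightarrow> pf g d \<Longrightarrow> pf (\<lambda>z. f z + g z) d"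
  unfolding pf_def by (metis degree_add_le poly_add)

lemma pf_diff: "pf f d \<Longrightarrow> pf g d \<Longrightarrow> pf (\<lambda>z. f z - g z) d"
  unfolding pf_def by (metis degree_diff_le poly_diff)

lemma pf_cmult: "pf f d \<Longrightarrow> pf (\<lambda>z. c * f z) d"
  unfolding pf_def by (metis degree_smult_le order_trans poly_smult)

lemma pf_mult: "pf f d \<Longrightarrow> pf g e \<Longrightarrow> pf (\<lambda>z. f z * g z) (d + e)"
  unfolding pf_def by (metis add_mono degree_mult_le order_trans poly_mult)

lemma pf_pow: "pf (\<lambda>z. z ^ m) m"
  unfolding pf_def by (rule exI[of _ "monom 1 m"]) (simp add: poly_monom degree_monom_le)

lemma pf_sum: "finite S \<Longrightarrow> (\<And>i. i \<in> S \<Longrightarrow> pf (f i) d) \<Longrightarrow> pf (\<lambda>z. \<Sum>i\<in>S. f i z) d"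
proof (induction S rule: finite_induct)
  case empty thus ?case using pf_const[of 0 d] by simp
next
  case (insert a S) thus ?case using pf_add[of "f a" d "\<lambda>z. \<Sum>i\<in>S. f i z"] by simp
qed

lemma pf_prod: "finite S \<Longrightarrow> (\<And>i. i \<in> S \<Longrightarrow> pf (f i) (d i)) \<Longrightarrow> pf (\<lambda>z. \<Prod>i\<in>S. f i z) (\<Sum>i\<in>S. d i)"
proof (induction S rule: finite_induct)
  case empty thus ?case using pf_const[of 1 0] by simp
next
  case (insert a S) thus ?case using pf_mult[of "f a" "d a" "\<lambda>z. \<Prod>i\<in>S. f i z"] by simp
qed

lemma pf_prod_lin: "finite S \<Longrightarrow> pf (\<lambda>z. \<Prod>i\<in>S. a i * z + b i) (card S)"
  using pf_prod[of S "\<lambda>i z. a i * z + b i" "\<lambda>i. 1"] pf_lin by simp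

lemma pf_roots:
  assumes "pf f d" "finite Z" "card Z > d" "\<forall>z\<in>Z. f z = 0"
  shows "f w = 0"
proof -
  obtain p where p: "degree p \<le> d" "\<forall>z. f z = poly p z" using assms(1) unfolding pf_def by blast
  have "p = 0"
  proof (rule ccontr)
    assume "p \<noteq> 0"
    hence "card {x. poly p x = 0} \<le> degree p" by (rule card_poly_roots_bound)
    moreover have "card Z \<le> card {x. poly p x = 0}"
      using assms(4) p(2) \<open>p \<noteq> 0\<close> by (intro card_mono poly_roots_finite) auto
    ultimately show False using p(1) assms(3) by linarith
  qed
  thus ?thesis using p(2) by simp
qed

lemma pf_inf_roots:
  assumes "pf f d" "infinite {z. f z = 0}"
  shows "f w = 0"
proof -
  obtain p where p: "degree p \<le> d" "\<forall>z. f z = poly p z" using assms(1) unfolding pf_def by blast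
  have "p = 0"
  proof (rule ccontr)
    assume "p \<noteq> 0"
    hence "finite {x. poly p x = 0}" by (rule poly_roots_finite)
    thus False using assms(2) p(2) by simp
  qed
  thus ?thesis using p(2) by simp
qed

definition Dv :: "(nat \<Rightarrow> K) \<Rightarrow> nat set \<Rightarrow> nat \<Rightarrow> K \<Rightarrow> K" where
  "Dv x V v z = (\<Prod>s\<in>V-{v}. z - x s)"

definition CRv :: "(nat \<Rightarrow> K) \<Rightarrow> nat set \<Rightarrow> nat \<Rightarrow> nat set \<Rightarrow> K \<Rightarrow> K" where
  "CRv x V v A z = (if v \<in> A then (\<Prod>s\<in>V-A. z - tt * x s) * (\<Prod>s\<in>A-{v}. z - x s)
      else (\<Prod>r\<in>A. tt * z - x r) * (\<Prod>s\<in>V-A-{v}. z - x s)) * CR x (A-{v}) (V-A-{v})"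

definition R1 :: "(nat \<Rightarrow> K) \<Rightarrow> nat set \<Rightarrow> nat \<Rightarrow> nat \<Rightarrow> int \<Rightarrow> int \<Rightarrow> K \<Rightarrow> K" where
  "R1 x V v k a b z = (\<Sum>A\<in>{A. A \<subseteq> V \<and> card A = k}.
      EE (x(v:=z)) a A * EE (x(v:=z)) b (V - A) * CRv x V v A z)"

lemma CR_upd: "v \<notin> A \<Longrightarrow> v \<notin> B \<Longrightarrow> CR (x(v:=z)) A B = CR x A B"
  unfolding CR_def om_def by (intro prod.cong refl) auto

lemma PP_upd: "v \<notin> A \<Longrightarrow> PP (x(v:=z)) A = PP x A"
  unfolding PP_def by (intro prod.cong refl) auto

lemma EE_upd:
  assumes "v \<notin> A" shows "EE (x(v:=z)) a A = EE x a A"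
proof -
  have "(\<Prod>r\<in>A. (x(v:=z)) r powi a) = (\<Prod>r\<in>A. x r powi a)" using assms by (intro prod.cong refl) auto
  thus ?thesis unfolding EE_def using PP_upd[OF assms] by simp
qed

lemma CRv_eq:
  assumes "finite V" "v \<in> V" "A \<subseteq> V" "z \<notin> x ` (V - {v})"
  shows "Dv x V v z * CR (x(v:=z)) A (V - A) = CRv x V v A z"
proof (cases "v \<in> A")
  case True
  let ?A0 = "A - {v}"
  have fA0: "finite ?A0" and fB: "finite (V - A)" using assms finite_subset by auto
  have A: "A = insert v ?A0" using True by auto
  have "CR (x(v:=z)) A (V - A) = (\<Prod>s\<in>V-A. om (x(v:=z)) v s) * CR (x(v:=z)) ?A0 (V - A)"
    by (subst A, rule CR_insert_left[OF fA0]) simp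
  also have "CR (x(v:=z)) ?A0 (V - A) = CR x ?A0 (V - A - {v})"
    using True by (subst CR_upd) auto
  finally have c: "CR (x(v:=z)) A (V - A) = (\<Prod>s\<in>V-A. om (x(v:=z)) v s) * CR x ?A0 (V - A - {v})" .
  have d: "Dv x V v z = (\<Prod>s\<in>V-A. z - x s) * (\<Prod>s\<in>?A0. z - x s)"
  proof -
    have "V - {v} = (V - A) \<union> ?A0" "(V - A) \<inter> ?A0 = {}" using True assms by auto
    thus ?thesis unfolding Dv_def using fA0 fB by (simp add: prod.union_disjoint)
  qed
  have e: "(\<Prod>s\<in>V-A. z - x s) * (\<Prod>s\<in>V-A. om (x(v:=z)) v s) = (\<Prod>s\<in>V-A. z - tt * x s)"
    unfolding prod.distrib[symmetric]
  proof (rule prod.cong[OF refl])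
    fix s assume s: "s \<in> V - A"
    hence "s \<noteq> v" "z \<noteq> x s" using True assms(4) by auto
    thus "(z - x s) * om (x(v:=z)) v s = z - tt * x s" unfolding om_def by simp
  qed
  show ?thesis unfolding c d CRv_def using True e by (simp add: mult_ac)
next
  case False
  let ?B0 = "V - A - {v}"
  have fA: "finite A" and fB0: "finite ?B0" using assms finite_subset by auto
  have B: "V - A = insert v ?B0" using False assms by auto
  have "CR (x(v:=z)) A (V - A) = (\<Prod>r\<in>A. om (x(v:=z)) r v) * CR (x(v:=z)) A ?B0"
    by (subst B, rule CR_insert_right[OF fB0]) simp
  also have "CR (x(v:=z)) A ?B0 = CR x (A - {v}) ?B0"
    using False by (subst CR_upd) auto
  finally have c: "CR (x(v:=z)) A (V - A) = (\<Prod>r\<in>A. om (x(v:=z)) r v) * CR x (A - {v}) ?B0" .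
  have d: "Dv x V v z = (\<Prod>s\<in>A. z - x s) * (\<Prod>s\<in>?B0. z - x s)"
  proof -
    have "V - {v} = A \<union> ?B0" "A \<inter> ?B0 = {}" using False assms by auto
    thus ?thesis unfolding Dv_def using fA fB0 by (simp add: prod.union_disjoint)
  qed
  have e: "(\<Prod>s\<in>A. z - x s) * (\<Prod>r\<in>A. om (x(v:=z)) r v) = (\<Prod>r\<in>A. tt * z - x r)"
    unfolding prod.distrib[symmetric]
  proof (rule prod.cong[OF refl])
    fix r assume r: "r \<in> A"
    hence "r \<noteq> v" "z \<noteq> x r" using False assms by auto
    hence "x r - z \<noteq> 0" by simp
    thus "(z - x r) * om (x(v:=z)) r v = tt * z - x r" unfolding om_def using \<open>r \<noteq> v\<close>
      by (simp add: field_simps)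
  qed
  show ?thesis unfolding c d CRv_def using False e by (simp add: mult_ac)
qed

lemma R1_eq:
  assumes "finite V" "v \<in> V" "z \<notin> x ` (V - {v})"
  shows "Dv x V v z * Sh (x(v:=z)) k a b V = R1 x V v k a b z"
  unfolding Sh_def R1_def sum_distrib_left
proof (rule sum.cong[OF refl])
  fix A assume "A \<in> {A. A \<subseteq> V \<and> card A = k}"
  hence "A \<subseteq> V" by simp
  thus "Dv x V v z * (EE (x(v := z)) a A * EE (x(v := z)) b (V - A) * CR (x(v := z)) A (V - A)) =
         EE (x(v := z)) a A * EE (x(v := z)) b (V - A) * CRv x V v A z"
    using CRv_eq[OF assms(1,2) _ assms(3)] by (metis mult.left_commute)
qed

lemma EE_pf:
  assumes "finite A"
  shows "pf (\<lambda>z. EE (x(v:=z)) (int a) A) (if v \<in> A then a + 2 * (card A - 1) else 0)"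
proof (cases "v \<in> A")
  case False thus ?thesis using EE_upd[OF False] pf_const by simp
next
  case True
  let ?A0 = "A - {v}"
  have fA0: "finite ?A0" using assms by simp
  have A: "A = insert v ?A0" using True by auto
  have eq: "EE (x(v:=z)) (int a) A = z ^ a * EE x (int a) ?A0 * (\<Prod>s\<in>?A0. 1 * z + (- tt * x s))
      * (\<Prod>r\<in>?A0. (- tt) * z + x r)" for z
  proof -
    have "EE (x(v:=z)) (int a) A = (x(v:=z)) v powi (int a) * EE (x(v:=z)) (int a) ?A0
        * (\<Prod>s\<in>?A0. (x(v:=z)) v - tt * (x(v:=z)) s) * (\<Prod>r\<in>?A0. (x(v:=z)) r - tt * (x(v:=z)) v)"
      by (subst A, rule EE_insert[OF fA0]) simp
    also have "\<dots> = z ^ a * EE x (int a) ?A0 * (\<Prod>s\<in>?A0. 1 * z + (- tt * x s))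
      * (\<Prod>r\<in>?A0. (- tt) * z + x r)"
      by (simp add: EE_upd)
    finally show ?thesis .
  qed
  have "pf (\<lambda>z. z ^ a * EE x (int a) ?A0 * (\<Prod>s\<in>?A0. 1 * z + (- tt * x s))
      * (\<Prod>r\<in>?A0. (- tt) * z + x r)) (a + 0 + card ?A0 + card ?A0)"
    by (intro pf_mult pf_pow pf_const pf_prod_lin fA0)
  moreover have "card ?A0 = card A - 1" using True assms by simp
  ultimately show ?thesis using True eq by (simp add: mult_2 add.assoc)
qed

lemma CRv_pf:
  assumes "finite V" "A \<subseteq> V"
  shows "pf (CRv x V v A) (if v \<in> A then card (V - A) + card (A - {v}) else card A + card (V - A - {v}))"
proof -
  have fA: "finite A" using assms finite_subset by blast
  show ?thesis
  proof (cases "v \<in> A")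
    case True
    have eq: "CRv x V v A = (\<lambda>z. (\<Prod>s\<in>V-A. 1 * z + (- tt * x s)) * (\<Prod>s\<in>A-{v}. 1 * z + (- x s)) * CR x (A-{v}) (V-A-{v}))"
      unfolding CRv_def using True by (simp add: fun_eq_iff)
    have "pf (\<lambda>z. (\<Prod>s\<in>V-A. 1 * z + (- tt * x s)) * (\<Prod>s\<in>A-{v}. 1 * z + (- x s)) * CR x (A-{v}) (V-A-{v}))
        (card (V - A) + card (A - {v}) + 0)"
      using assms fA by (intro pf_mult pf_const pf_prod_lin) auto
    thus ?thesis using True eq by simp
  next
    case False
    have eq: "CRv x V v A = (\<lambda>z. (\<Prod>r\<in>A. tt * z + (- x r)) * (\<Prod>s\<in>V-A-{v}. 1 * z + (- x s)) * CR x (A-{v}) (V-A-{v}))"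
      unfolding CRv_def using False by (simp add: fun_eq_iff)
    have "pf (\<lambda>z. (\<Prod>r\<in>A. tt * z + (- x r)) * (\<Prod>s\<in>V-A-{v}. 1 * z + (- x s)) * CR x (A-{v}) (V-A-{v}))
        (card A + card (V - A - {v}) + 0)"
      using assms fA by (intro pf_mult pf_const pf_prod_lin) auto
    thus ?thesis using False eq by simp
  qed
qed

lemma R1_pf:
  assumes V: "finite V" "v \<in> V"
    and d1: "a + 2 * (k - 1) + (card V - k + (k - 1)) \<le> d"
    and d2: "k < card V \<Longrightarrow> b + 2 * (card V - k - 1) + (k + (card V - k - 1)) \<le> d"
  shows "pf (R1 x V v k (int a) (int b)) d"
proof -
  have "pf (\<lambda>z. \<Sum>A\<in>{A. A \<subseteq> V \<and> card A = k}. EE (x(v:=z)) (int a) A * EE (x(v:=z)) (int b) (V - A) * CRv x V v A z) d"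
  proof (rule pf_sum)
    show "finite {A. A \<subseteq> V \<and> card A = k}" by (rule finite_subset[of _ "Pow V"]) (use V in auto)
  next
    fix A assume "A \<in> {A. A \<subseteq> V \<and> card A = k}"
    hence A: "A \<subseteq> V" "card A = k" by auto
    have fA: "finite A" and fB: "finite (V - A)" using A V finite_subset by auto
    have cB: "card (V - A) = card V - k" using A V fA by (simp add: card_Diff_subset)
    have p: "pf (\<lambda>z. EE (x(v:=z)) (int a) A * EE (x(v:=z)) (int b) (V - A) * CRv x V v A z)
      ((if v \<in> A then a + 2 * (card A - 1) else 0) + (if v \<in> V - A then b + 2 * (card (V - A) - 1) else 0)
       + (if v \<in> A then card (V - A) + card (A - {v}) else card A + card (V - A - {v})))"
      by (intro pf_mult EE_pf CRv_pf fA fB V(1) A(1))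
    show "pf (\<lambda>z. EE (x(v:=z)) (int a) A * EE (x(v:=z)) (int b) (V - A) * CRv x V v A z) d"
    proof (cases "v \<in> A")
      case True
      have "card (A - {v}) = k - 1" using True A fA by simp
      thus ?thesis using p True d1 A cB by (auto intro: pf_mono)
    next
      case False
      hence "v \<in> V - A" using V by simp
      hence "card (V - A) \<ge> 1" using fB by (metis One_nat_def Suc_leI card_gt_0_iff empty_iff)
      hence lt: "k < card V" using cB by simp
      have "card (V - A - {v}) = card V - k - 1" using False V cB fB by simp
      thus ?thesis using p False d2[OF lt] A cB V by (auto intro: pf_mono)
    qed
  qed
  thus ?thesis unfolding R1_def by (simp add: fun_eq_iff[symmetric])
qed

definition RR :: "(nat \<Rightarrow> K) \<Rightarrow> nat set \<Rightarrow> nat \<Rightarrow> nat \<Rightarrow> K \<Rightarrow> K" where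
  "RR x V v k z = R1 x V v k 1 1 z - inverse (tt^k) * R1 x V v k 0 2 z - inverse tt * R1 x V v (k+1) 0 2 z"

lemma RR_pf:
  assumes "finite V" "v \<in> V" "card V = 2 * k" "2 \<le> k"
  shows "pf (RR x V v k) (4 * k - 1)"
proof -
  have p1: "pf (R1 x V v k (int 1) (int 1)) (4 * k - 1)"
    by (rule R1_pf) (use assms in auto)
  have p2: "pf (R1 x V v k (int 0) (int 2)) (4 * k - 1)"
    by (rule R1_pf) (use assms in auto)
  have p3: "pf (R1 x V v (k+1) (int 0) (int 2)) (4 * k - 1)"
    by (rule R1_pf) (use assms in auto)
  have "pf (\<lambda>z. R1 x V v k (int 1) (int 1) z - inverse (tt^k) * R1 x V v k (int 0) (int 2) z
      - inverse tt * R1 x V v (k+1) (int 0) (int 2) z) (4 * k - 1)"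
    by (intro pf_diff pf_cmult p1 p2 p3)
  thus ?thesis unfolding RR_def[abs_def] by simp
qed

lemma RR_eq:
  assumes "finite V" "v \<in> V" "z \<notin> x ` (V - {v})"
  shows "Dv x V v z * Om1 (x(v:=z)) k V = RR x V v k z"
  unfolding Om1_def RR_def R1_eq[OF assms, symmetric] by (simp add: algebra_simps)

lemma R1_root_pair:
  assumes V: "finite V" "v \<in> V" "s \<in> V" "s \<noteq> v" and inj: "inj_on x V"
    and C: "C \<subseteq> V - {v,s}"
  shows "EE (x(v:=x s)) a (insert v C) * EE (x(v:=x s)) b (V - insert v C) * CRv x V v (insert v C) (x s)
       + EE (x(v:=x s)) a (insert s C) * EE (x(v:=x s)) b (V - insert s C) * CRv x V v (insert s C) (x s) = 0"
proof -
  define z where "z = x s"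
  define y where "y = x(v:=z)"
  define D where "D = V - {v,s} - C"
  have fC: "finite C" and fD: "finite D" using C V finite_subset unfolding D_def by auto
  have nC: "v \<notin> C" "s \<notin> C" and nD: "v \<notin> D" "s \<notin> D" using C unfolding D_def by auto
  have VC1: "V - insert v C = insert s D" and VC2: "V - insert s C = insert v D"
    using C V unfolding D_def by auto
  have yvs: "y v = y s" unfolding y_def z_def using V by simp
  have ea: "EE y a (insert v C) = EE y a (insert s C)"
    unfolding EE_insert[OF fC nC(1)] EE_insert[OF fC nC(2)] yvs ..
  have eb: "EE y b (insert s D) = EE y b (insert v D)"
    unfolding EE_insert[OF fD nD(1)] EE_insert[OF fD nD(2)] yvs ..
  have xcs: "x c \<noteq> x s" if "c \<in> C" for c using that C V inj by (metis Diff_iff inj_onD insertCI subsetD)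
  have xds: "x d \<noteq> x s" if "d \<in> D" for d using that V inj unfolding D_def by (metis Diff_iff inj_onD insertCI)
  have i1: "(\<Prod>c\<in>C. z - x c) * (\<Prod>c\<in>C. om x c s) = (\<Prod>c\<in>C. tt * z - x c)"
    unfolding prod.distrib[symmetric]
  proof (rule prod.cong[OF refl])
    fix c assume "c \<in> C"
    hence "x c - x s \<noteq> 0" using xcs by simp
    thus "(z - x c) * om x c s = tt * z - x c" unfolding om_def z_def by (simp add: field_simps)
  qed
  have i2: "(\<Prod>d\<in>D. z - x d) * (\<Prod>d\<in>D. om x s d) = (\<Prod>d\<in>D. z - tt * x d)"
    unfolding prod.distrib[symmetric]
  proof (rule prod.cong[OF refl])
    fix d assume "d \<in> D"
    hence "x s - x d \<noteq> 0" using xds by force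
    thus "(z - x d) * om x s d = z - tt * x d" unfolding om_def z_def by (simp add: field_simps)
  qed
  have c1: "CRv x V v (insert v C) z = (z - tt * x s) * (\<Prod>d\<in>D. z - tt * x d) * (\<Prod>c\<in>C. tt * z - x c) * CR x C D"
  proof -
    have a1: "insert v C - {v} = C" "insert s D - {v} = insert s D" using nC nD V by auto
    have "CRv x V v (insert v C) z = (\<Prod>s'\<in>insert s D. z - tt * x s') * (\<Prod>c\<in>C. z - x c) * CR x C (insert s D)"
      unfolding CRv_def VC1 a1 by simp
    also have "\<dots> = (z - tt * x s) * (\<Prod>d\<in>D. z - tt * x d) * ((\<Prod>c\<in>C. z - x c) * (\<Prod>c\<in>C. om x c s)) * CR x C D"
      using fD nD by (simp add: CR_insert_right mult_ac)
    finally show ?thesis unfolding i1 .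
  qed
  have c2: "CRv x V v (insert s C) z = (tt * z - x s) * (\<Prod>c\<in>C. tt * z - x c) * (\<Prod>d\<in>D. z - tt * x d) * CR x C D"
  proof -
    have a2: "insert s C - {v} = insert s C" "insert v D - {v} = D" using nC nD V by auto
    have "v \<notin> insert s C" using nC V by simp
    hence "CRv x V v (insert s C) z = (\<Prod>r\<in>insert s C. tt * z - x r) * (\<Prod>d\<in>D. z - x d) * CR x (insert s C) D"
      unfolding CRv_def VC2 a2 by simp
    also have "\<dots> = (tt * z - x s) * (\<Prod>c\<in>C. tt * z - x c) * ((\<Prod>d\<in>D. z - x d) * (\<Prod>d\<in>D. om x s d)) * CR x C D"
      using fC nC by (simp add: CR_insert_left mult_ac)
    finally show ?thesis unfolding i2 .
  qed
  have eq: "EE y a (insert v C) * EE y b (V - insert v C) * CRv x V v (insert v C) z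
       + EE y a (insert s C) * EE y b (V - insert s C) * CRv x V v (insert s C) z
       = EE y a (insert s C) * EE y b (insert v D) * (CRv x V v (insert v C) z + CRv x V v (insert s C) z)"
    unfolding VC1 VC2 ea eb by (simp add: algebra_simps)
  have z0: "CRv x V v (insert v C) z + CRv x V v (insert s C) z = 0"
    unfolding c1 c2 by (simp add: z_def algebra_simps)
  have "EE y a (insert v C) * EE y b (V - insert v C) * CRv x V v (insert v C) z
       + EE y a (insert s C) * EE y b (V - insert s C) * CRv x V v (insert s C) z = 0"
    unfolding eq z0 by simp
  thus ?thesis unfolding y_def z_def .
qed

lemma R1_root:
  assumes V: "finite V" "v \<in> V" "s \<in> V" "s \<noteq> v" and inj: "inj_on x V" and k: "1 \<le> k"
  shows "R1 x V v k a b (x s) = 0"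
proof -
  let ?y = "x(v:=x s)"
  let ?T = "\<lambda>A. EE ?y a A * EE ?y b (V - A) * CRv x V v A (x s)"
  let ?S = "{A. A \<subseteq> V \<and> card A = k}"
  let ?S1 = "{A. A \<subseteq> V \<and> card A = k \<and> v \<in> A \<and> s \<notin> A}"
  let ?S2 = "{A. A \<subseteq> V \<and> card A = k \<and> s \<in> A \<and> v \<notin> A}"
  let ?C = "{C. C \<subseteq> V - {v,s} \<and> card C = k - 1}"
  have finS: "finite ?S" by (rule finite_subset[of _ "Pow V"]) (use V in auto)
  have "R1 x V v k a b (x s) = sum ?T ?S" unfolding R1_def ..
  also have "\<dots> = sum ?T (?S1 \<union> ?S2)"
  proof (rule sum.mono_neutral_right[OF finS])
    show "?S1 \<union> ?S2 \<subseteq> ?S" by auto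
    show "\<forall>A\<in>?S - (?S1 \<union> ?S2). ?T A = 0"
    proof
      fix A assume A: "A \<in> ?S - (?S1 \<union> ?S2)"
      have fA: "finite A" using A V finite_subset by auto
      have "CRv x V v A (x s) = 0"
      proof (cases "v \<in> A")
        case True
        hence "s \<in> A - {v}" using A V by auto
        hence "(\<Prod>s'\<in>A-{v}. x s - x s') = 0" using fA by (intro prod_has_zero) auto
        thus ?thesis unfolding CRv_def using True by simp
      next
        case False
        hence "s \<in> V - A - {v}" using A V by auto
        hence "(\<Prod>s'\<in>V-A-{v}. x s - x s') = 0" using V by (intro prod_has_zero) auto
        thus ?thesis unfolding CRv_def using False by simp
      qed
      thus "?T A = 0" by simp
    qed
  qed
  also have "\<dots> = sum ?T ?S1 + sum ?T ?S2"
    by (rule sum.union_disjoint) (auto intro: finite_subset[OF _ finS])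
  also have "sum ?T ?S1 = sum (?T \<circ> insert v) ?C"
    using subsets_split[OF V(1,2,3) V(4)[symmetric] k] by (simp add: sum.reindex)
  also have "sum ?T ?S2 = sum (?T \<circ> insert s) ?C"
  proof -
    have e: "V - {s,v} = V - {v,s}" by auto
    show ?thesis using subsets_split[OF V(1,3,2,4) k] unfolding e by (simp add: sum.reindex)
  qed
  also have "sum (?T \<circ> insert v) ?C + sum (?T \<circ> insert s) ?C = (\<Sum>C\<in>?C. 0)"
    unfolding sum.distrib[symmetric]
    by (rule sum.cong[OF refl]) (use R1_root_pair[OF V inj] in simp)
  finally show ?thesis by simp
qed

lemma RR_root:
  assumes "finite V" "v \<in> V" "s \<in> V" "s \<noteq> v" "inj_on x V" "1 \<le> k"
  shows "RR x V v k (x s) = 0"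
  unfolding RR_def using R1_root[OF assms] R1_root[OF assms(1-5), of "k+1"] by simp

definition gen :: "(nat \<Rightarrow> K) \<Rightarrow> nat \<Rightarrow> nat \<Rightarrow> bool" where
  "gen x i j \<longleftrightarrow> x i \<noteq> tt * x j \<and> x i \<noteq> tt^2 * x j"

lemma inj_upd:
  assumes inj: "inj_on x V" and zn: "z \<notin> x ` (V - {v})"
  shows "inj_on (x(v:=z)) V"
proof (rule inj_onI)
  fix a b assume a: "a \<in> V" and b: "b \<in> V" and eq: "(x(v:=z)) a = (x(v:=z)) b"
  show "a = b"
  proof (rule ccontr)
    assume ne: "a \<noteq> b"
    show False
    proof (cases "a = v")
      case True
      hence bv: "b \<noteq> v" using ne by simp
      hence "z = x b" using eq True by simp
      moreover have "b \<in> V - {v}" using b bv by simp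
      ultimately show False using zn by blast
    next
      case False
      show False
      proof (cases "b = v")
        case True
        hence "z = x a" using eq False by simp
        moreover have "a \<in> V - {v}" using a False by simp
        ultimately show False using zn by blast
      next
        case False2: False
        hence "x a = x b" using eq False by simp
        hence "a = b" by (rule inj_onD[OF inj _ a b])
        thus False using ne by simp
      qed
    qed
  qed
qed

lemma not_in_img:
  assumes "inj_on x V" "v \<in> V"
  shows "x v \<notin> x ` (V - {v})"
proof
  assume "x v \<in> x ` (V - {v})"
  then obtain s where s: "s \<in> V - {v}" "x v = x s" by blast
  have "v = s" by (rule inj_onD[OF assms(1) s(2) assms(2)]) (use s(1) in simp)
  thus False using s by simp
qed

lemma Dv_nz:
  assumes "finite V" "inj_on x V" "v \<in> V"
  shows "Dv x V v (x v) \<noteq> 0"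
  unfolding Dv_def
proof
  assume z: "(\<Prod>s\<in>V - {v}. x v - x s) = 0"
  have "\<exists>s\<in>V - {v}. x v - x s = 0" using prod_zero_iff[of "V - {v}" "\<lambda>s. x v - x s"] assms(1) z by simp
  then obtain s where s: "s \<in> V - {v}" "x v - x s = 0" by blast
  hence "x v \<in> x ` (V - {v})" by simp
  thus False using not_in_img[OF assms(2,3)] by blast
qed

lemma RR_at_v:
  assumes "finite V" "v \<in> V" "inj_on x V"
  shows "RR x V v k (x v) = Dv x V v (x v) * Om1 x k V"
  using RR_eq[OF assms(1,2) not_in_img[OF assms(3,2)], of k] by simp

lemma Om1_from_RR:
  assumes "finite V" "v \<in> V" "inj_on x V" "RR x V v k (x v) = 0"
  shows "Om1 x k V = 0"
  using RR_at_v[OF assms(1-3), of k] Dv_nz[OF assms(1,3,2)] assms(4) by simp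

lemma step_generic:
  assumes k: "2 \<le> k" and V: "finite V" "card V = 2*k" and inj: "inj_on x V"
    and nz: "\<forall>i\<in>V. x i \<noteq> 0"
    and g: "\<forall>i\<in>V. \<forall>j\<in>V. i \<noteq> j \<longrightarrow> gen x i j"
    and IH: "\<And>V' x'. finite V' \<Longrightarrow> card V' = 2*(k-1) \<Longrightarrow> inj_on x' V' \<Longrightarrow> \<forall>i\<in>V'. x' i \<noteq> 0 \<Longrightarrow> Om1 x' (k-1) V' = 0"
  shows "Om1 x k V = 0"
proof -
  have "V \<noteq> {}" using V k by auto
  then obtain v where v: "v \<in> V" by blast
  let ?W = "V - {v}"
  have fW: "finite ?W" and cW: "card ?W = 2*k - 1" using V v by auto
  have tt1: "tt \<noteq> 1" and tt0: "tt \<noteq> 0" and tt2: "tt^2 \<noteq> 1" using tt_ne1 tt_nz tt_sq_ne1 .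
  have IH2: "Om1 (x(v:=z)) (k-1) (V - {a,b}) = 0" if ab: "a \<in> V" "b \<in> V" "a \<noteq> b" "a = v \<or> b = v" "z \<noteq> 0" for a b z
  proof (rule IH)
    show "finite (V - {a,b})" using V by simp
    show "card (V - {a,b}) = 2*(k-1)" using V ab by (simp add: card_Diff_subset)
    have "inj_on x (V - {a,b})" using inj by (rule inj_on_subset) auto
    moreover have "inj_on (x(v:=z)) (V - {a,b}) = inj_on x (V - {a,b})"
      by (rule inj_on_cong) (use ab in auto)
    ultimately show "inj_on (x(v:=z)) (V - {a,b})" by simp
    show "\<forall>i\<in>V - {a,b}. (x(v:=z)) i \<noteq> 0" using nz ab by auto
  qed
  have r1: "RR x V v k (tt * x u) = 0" if u: "u \<in> ?W" for u
  proof -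
    let ?z = "tt * x u"
    have zn: "?z \<notin> x ` ?W"
    proof
      assume "?z \<in> x ` ?W"
      then obtain s where s: "s \<in> ?W" "x s = tt * x u" by (metis imageE)
      show False
      proof (cases "s = u")
        case True thus False using s u nz tt1 by (metis DiffE mult_cancel_right2)
      next
        case False thus False using s u g unfolding gen_def by auto
      qed
    qed
    have "Om1 (x(v:=?z)) k V = 0"
    proof (rule Om1_wheel[OF V(1,2)])
      show "u \<in> V" "v \<in> V" "u \<noteq> v" using u v by auto
      show "inj_on (x(v:=?z)) V" using inj zn by (rule inj_upd)
      show "(x(v:=?z)) v = tt * (x(v:=?z)) u" using u by simp
      show "2 \<le> k" by fact
      show "Om1 (x(v:=?z)) (k-1) (V - {u,v}) = 0" using u v nz tt0 by (intro IH2) auto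
    qed
    thus ?thesis using RR_eq[OF V(1) v zn, of k] by simp
  qed
  have r2: "RR x V v k (x u / tt) = 0" if u: "u \<in> ?W" for u
  proof -
    let ?z = "x u / tt"
    have zn: "?z \<notin> x ` ?W"
    proof
      assume "?z \<in> x ` ?W"
      then obtain s where s: "s \<in> ?W" "x s = x u / tt" by (metis imageE)
      hence s': "x u = tt * x s" using tt0 by (simp add: field_simps)
      show False
      proof (cases "s = u")
        case True thus False using s' u nz tt1 by (metis DiffE mult_cancel_right2)
      next
        case False
        hence "gen x u s" using g s u by auto
        thus False using s' unfolding gen_def by blast
      qed
    qed
    have "Om1 (x(v:=?z)) k V = 0"
    proof (rule Om1_wheel[OF V(1,2)])
      show "v \<in> V" "u \<in> V" "v \<noteq> u" using u v by auto
      show "inj_on (x(v:=?z)) V" using inj zn by (rule inj_upd)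
      show "(x(v:=?z)) u = tt * (x(v:=?z)) v" using u tt0 by simp
      show "2 \<le> k" by fact
      show "Om1 (x(v:=?z)) (k-1) (V - {v,u}) = 0" using u v nz tt0 by (intro IH2) auto
    qed
    thus ?thesis using RR_eq[OF V(1) v zn, of k] by simp
  qed
  have r3: "RR x V v k (x s) = 0" if "s \<in> ?W" for s
    using that k by (intro RR_root[OF V(1) v _ _ inj]) auto
  let ?Z1 = "x ` ?W" and ?Z2 = "(\<lambda>u. tt * x u) ` ?W" and ?Z3 = "(\<lambda>u. x u / tt) ` ?W"
  have i1: "inj_on x ?W" using inj by (rule inj_on_subset) auto
  have i2: "inj_on (\<lambda>u. tt * x u) ?W" using i1 tt0 by (auto simp: inj_on_def)
  have i3: "inj_on (\<lambda>u. x u / tt) ?W" using i1 tt0 by (auto simp: inj_on_def)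
  have d12: "?Z1 \<inter> ?Z2 = {}"
  proof (rule ccontr)
    assume "?Z1 \<inter> ?Z2 \<noteq> {}"
    then obtain s u where su: "s \<in> ?W" "u \<in> ?W" "x s = tt * x u" by blast
    show False
    proof (cases "s = u")
      case True thus False using su nz tt1 by (metis DiffE mult_cancel_right2)
    next
      case False thus False using su g unfolding gen_def by auto
    qed
  qed
  have d123: "(?Z1 \<union> ?Z2) \<inter> ?Z3 = {}"
  proof (rule ccontr)
    assume "(?Z1 \<union> ?Z2) \<inter> ?Z3 \<noteq> {}"
    then obtain s u where su: "s \<in> ?W" "u \<in> ?W" "x s = x u / tt \<or> tt * x s = x u / tt" by blast
    hence su': "x u = tt * x s \<or> x u = tt^2 * x s" using tt0 by (auto simp: field_simps power2_eq_square)
    show False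
    proof (cases "s = u")
      case True
      hence "x u \<noteq> 0" using su nz by auto
      thus False using su' True tt1 tt2 by (metis mult_cancel_right2)
    next
      case False thus False using su su' g unfolding gen_def by auto
    qed
  qed
  have cZ: "card (?Z1 \<union> ?Z2 \<union> ?Z3) = 3 * (2*k - 1)"
  proof -
    have "card (?Z1 \<union> ?Z2 \<union> ?Z3) = card (?Z1 \<union> ?Z2) + card ?Z3"
      using fW d123 by (intro card_Un_disjoint) auto
    also have "card (?Z1 \<union> ?Z2) = card ?Z1 + card ?Z2"
      using fW d12 by (intro card_Un_disjoint) auto
    finally show ?thesis using card_image[OF i1] card_image[OF i2] card_image[OF i3] cW by simp
  qed
  have "RR x V v k (x v) = 0"
  proof (rule pf_roots[OF RR_pf[OF V(1) v V(2) k]])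
    show "finite (?Z1 \<union> ?Z2 \<union> ?Z3)" using fW by simp
    show "4 * k - 1 < card (?Z1 \<union> ?Z2 \<union> ?Z3)" using cZ k by simp
    show "\<forall>z\<in>?Z1 \<union> ?Z2 \<union> ?Z3. RR x V v k z = 0" using r1 r2 r3 by blast
  qed
  thus ?thesis by (rule Om1_from_RR[OF V(1) v inj])
qed

lemma extend:
  assumes k: "2 \<le> k" and V: "finite V" "card V = 2*k"
    and G: "\<And>x. inj_on x V \<Longrightarrow> \<forall>i\<in>V. x i \<noteq> 0 \<Longrightarrow> \<forall>i\<in>V. \<forall>j\<in>V. i \<noteq> j \<longrightarrow> gen x i j \<Longrightarrow> Om1 x k V = 0"
    and x: "inj_on x V" "\<forall>i\<in>V. x i \<noteq> 0"
  shows "Om1 x k V = 0"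
proof -
  have tt0: "tt \<noteq> 0" by (rule tt_nz)
  have Q: "\<forall>x. inj_on x V \<longrightarrow> (\<forall>i\<in>V. x i \<noteq> 0) \<longrightarrow>
      (\<forall>i\<in>V. \<forall>j\<in>V. i \<noteq> j \<longrightarrow> i \<notin> W \<longrightarrow> j \<notin> W \<longrightarrow> gen x i j) \<longrightarrow> Om1 x k V = 0"
    if "W \<subseteq> V" for W
    using finite_subset[OF that V(1)] that
  proof (induction W rule: finite_subset_induct)
    case empty
    show ?case using G by auto
  next
    case (insert w W)
    show ?case
    proof (intro allI impI)
      fix x assume xi: "inj_on x V" and nz: "\<forall>i\<in>V. x i \<noteq> 0"
        and gw: "\<forall>i\<in>V. \<forall>j\<in>V. i \<noteq> j \<longrightarrow> i \<notin> insert w W \<longrightarrow> j \<notin> insert w W \<longrightarrow> gen x i j"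
      let ?U = "V - {w}"
      define Bad where "Bad = insert 0 (x ` ?U \<union> (\<lambda>j. tt * x j) ` ?U \<union> (\<lambda>j. tt^2 * x j) ` ?U
          \<union> (\<lambda>j. x j / tt) ` ?U \<union> (\<lambda>j. x j / tt^2) ` ?U)"
      have fB: "finite Bad" unfolding Bad_def using V(1) by simp
      have good: "RR x V w k z = 0" if z: "z \<notin> Bad" for z
      proof -
        have zn: "z \<notin> x ` ?U" using z unfolding Bad_def by blast
        have h1: "inj_on (x(w:=z)) V" using xi zn by (rule inj_upd)
        have h2: "\<forall>i\<in>V. (x(w:=z)) i \<noteq> 0" using nz z unfolding Bad_def by auto
        have h3: "\<forall>i\<in>V. \<forall>j\<in>V. i \<noteq> j \<longrightarrow> i \<notin> W \<longrightarrow> j \<notin> W \<longrightarrow> gen (x(w:=z)) i j"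
          proof (intro ballI impI)
            fix i j assume ij: "i \<in> V" "j \<in> V" "i \<noteq> j" "i \<notin> W" "j \<notin> W"
            show "gen (x(w:=z)) i j"
            proof (cases "i = w")
              case True
              hence jU: "j \<in> ?U" using ij by auto
              have "z \<noteq> tt * x j" using z jU unfolding Bad_def by blast
              moreover have "z \<noteq> tt^2 * x j" using z jU unfolding Bad_def by blast
              ultimately show ?thesis unfolding gen_def using True ij by simp
            next
              case False
              show ?thesis
              proof (cases "j = w")
                case True
                hence iU: "i \<in> ?U" using ij False by auto
                have "z \<noteq> x i / tt" using z iU unfolding Bad_def by blast
                hence 1: "x i \<noteq> tt * z" using tt0 by (auto simp: field_simps)
                have "z \<noteq> x i / tt^2" using z iU unfolding Bad_def by blast
                hence 2: "x i \<noteq> tt^2 * z" using tt0 by (auto simp: field_simps)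
                show ?thesis unfolding gen_def using True False 1 2 by simp
              next
                case False2: False
                have "gen x i j" using gw ij False False2 by auto
                thus ?thesis unfolding gen_def using False False2 by simp
              qed
            qed
          qed
        have "Om1 (x(w:=z)) k V = 0" using insert.IH h1 h2 h3 by blast
        thus ?thesis using RR_eq[OF V(1) insert.hyps(2) zn, of k] by simp
      qed
      have "infinite (UNIV - Bad)" using fB infinite_K by (rule Diff_infinite_finite)
      moreover have "UNIV - Bad \<subseteq> {z. RR x V w k z = 0}" using good by auto
      ultimately have "infinite {z. RR x V w k z = 0}" using finite_subset by blast
      hence "RR x V w k (x w) = 0" by (rule pf_inf_roots[OF RR_pf[OF V(1) insert.hyps(2) V(2) k]])
      thus "Om1 x k V = 0" by (rule Om1_from_RR[OF V(1) insert.hyps(2) xi])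
    qed
  qed
  show ?thesis using Q[OF order_refl] x by blast
qed

lemma Om1_zero:
  "1 \<le> k \<Longrightarrow> finite V \<Longrightarrow> card V = 2*k \<Longrightarrow> inj_on x V \<Longrightarrow> \<forall>i\<in>V. x i \<noteq> 0 \<Longrightarrow> Om1 x k V = 0"
proof (induction k arbitrary: V x)
  case 0 thus ?case by simp
next
  case (Suc m)
  show ?case
  proof (cases "m = 0")
    case True thus ?thesis using Om1_base[of V x] Suc.prems by simp
  next
    case False
    hence k: "2 \<le> Suc m" by simp
    show ?thesis
    proof (rule extend[OF k Suc.prems(2,3) _ Suc.prems(4,5)])
      fix y assume y: "inj_on y V" "\<forall>i\<in>V. y i \<noteq> 0" "\<forall>i\<in>V. \<forall>j\<in>V. i \<noteq> j \<longrightarrow> gen y i j"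
      show "Om1 y (Suc m) V = 0"
      proof (rule step_generic[OF k Suc.prems(2,3) y])
        fix V' :: "nat set" and x' :: "nat \<Rightarrow> K" assume "finite V'" "card V' = 2 * (Suc m - 1)" "inj_on x' V'" "\<forall>i\<in>V'. x' i \<noteq> 0"
        thus "Om1 x' (Suc m - 1) V' = 0" using Suc.IH False by simp
      qed
    qed
  qed
qed

lemma Sh_shift:
  assumes V: "finite V" and nz: "\<forall>i\<in>V. x i \<noteq> 0"
  shows "Sh x k (a + c) (b + c) V = (\<Prod>r\<in>V. x r powi c) * Sh x k a b V"
  unfolding Sh_def sum_distrib_left
proof (rule sum.cong[OF refl])
  fix A assume "A \<in> {A. A \<subseteq> V \<and> card A = k}"
  hence A: "A \<subseteq> V" by simp
  have EEs: "EE x (e + c) B = (\<Prod>r\<in>B. x r powi c) * EE x e B" if "B \<subseteq> V" for B e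
  proof -
    have "(\<Prod>r\<in>B. x r powi (e + c)) = (\<Prod>r\<in>B. x r powi c * x r powi e)"
      by (rule prod.cong[OF refl]) (use that nz in \<open>auto simp: power_int_add\<close>)
    thus ?thesis unfolding EE_def by (simp add: prod.distrib mult_ac)
  qed
  have split: "(\<Prod>r\<in>V. x r powi c) = (\<Prod>r\<in>A. x r powi c) * (\<Prod>r\<in>V - A. x r powi c)"
    using prod.subset_diff[OF A V] by (simp add: mult_ac)
  show "EE x (a + c) A * EE x (b + c) (V - A) * CR x A (V - A) =
        (\<Prod>r\<in>V. x r powi c) * (EE x a A * EE x b (V - A) * CR x A (V - A))"
    unfolding EEs[OF A] EEs[OF Diff_subset] split by (simp add: mult_ac)
qed

theorem lemma6p7:
  fixes k :: nat and n :: int and x :: "nat \<Rightarrow> K"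
  assumes "k \<ge> 1"
    and "inj_on x {..<2*k}"
    and "\<forall>i<2*k. x i \<noteq> 0"
  shows "shuffle k k (E k n) (E k n) x
           - qq ^ (2*k) * shuffle k k (E k (n-1)) (E k (n+1)) x
         = qq ^ 2 * shuffle (k+1) (k-1) (E (k+1) (n-1)) (E (k-1) (n+1)) x"
proof -
  let ?X = "{..<2*k}"
  have fX: "finite ?X" and cX: "card ?X = 2*k" by auto
  have nz: "\<forall>i\<in>?X. x i \<noteq> 0" using assms(3) by auto
  have kk: "k + k = 2 * k" by simp
  have kk2: "k + 1 + (k - 1) = 2 * k" using assms(1) by simp
  have e1: "shuffle k k (E k n) (E k n) x = Sh x k n n ?X"
    using shuffle_Sh[of k k n n x] unfolding kk .
  have e2: "shuffle k k (E k (n-1)) (E k (n+1)) x = Sh x k (n-1) (n+1) ?X"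
    using shuffle_Sh[of k k "n-1" "n+1" x] unfolding kk .
  have e3: "shuffle (k+1) (k-1) (E (k+1) (n-1)) (E (k-1) (n+1)) x = Sh x (k+1) (n-1) (n+1) ?X"
    using shuffle_Sh[of "k+1" "k-1" "n-1" "n+1" x] unfolding kk2 .
  let ?P = "\<Prod>r\<in>?X. x r powi (n-1)"
  have i1: "(1::int) + (n - 1) = n" and i2: "(0::int) + (n - 1) = n - 1" and i3: "(2::int) + (n - 1) = n + 1"
    by simp_all
  have s1: "Sh x k n n ?X = ?P * Sh x k 1 1 ?X"
    using Sh_shift[OF fX nz, of k 1 "n-1" 1] unfolding i1 .
  have s2: "Sh x k (n-1) (n+1) ?X = ?P * Sh x k 0 2 ?X"
    using Sh_shift[OF fX nz, of k 0 "n-1" 2] unfolding i2 i3 .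
  have s3: "Sh x (k+1) (n-1) (n+1) ?X = ?P * Sh x (k+1) 0 2 ?X"
    using Sh_shift[OF fX nz, of "k+1" 0 "n-1" 2] unfolding i2 i3 .
  have q1: "qq ^ (2*k) = inverse (tt^k)" unfolding tt_def by (simp add: power_mult power_inverse)
  have q2: "qq ^ 2 = inverse tt" unfolding tt_def by simp
  have O: "Om1 x k ?X = 0" by (rule Om1_zero[OF assms(1) fX cX assms(2) nz])
  have "?P * Sh x k 1 1 ?X - inverse (tt^k) * (?P * Sh x k 0 2 ?X) - inverse tt * (?P * Sh x (k+1) 0 2 ?X)
      = ?P * Om1 x k ?X" unfolding Om1_def by (simp add: algebra_simps)
  also have "\<dots> = 0" using O by simp
  finally show ?thesis unfolding e1 e2 e3 s1 s2 s3 q1 q2 by (simp add: algebra_simps)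
qed

end
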